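(* Let $(M,d)$ be a complete separable geodesic space and $m\in\mathcal P_2(M)$ such that (A1) and (A2) hold. Assume there exist constants $p,r_0>0$ and a function $c:M\to\mathbb R_+$ such that $m(B(x,r))>c(x)r^p$ for all $x\in M$ and all $r\in(0,r_0]$. Assume there exist $\beta,L>0$ such that every loss $\ell_t$ is measurable, geodesically $\beta$-expconcave and $L$-Lipschitz, and that the \textsc{ewb} forecaster with $\beta_t=\beta$ is well defined (normalizing integrals finite and positive, $m_t\in\mathcal P_2(M)$). Let $n\ge 1/r_0$ and suppose $x_n^*\in\arg\min_{x\in M}\sum_{t=1}^n\ell_t(x)$ exists. Then \[R_n\le L+\frac1\beta\ln\frac{1}{c(x_n^* )}+\frac{p\ln n}{\beta}.\]
   Context: A geodesic is a path $\gamma:[0,1]\to M$ with $d(\gamma(s),\gamma(t))=|t-s|\,d(\gamma(0),\gamma(1))$. $f$ is geodesically convex if $t\mapsto f(\gamma(t))$ is convex for every geodesic $\gamma$; geodesically concave if $-f$ is; geodesically $\beta$-expconcave if $e^{-\beta f}$ is geodesically concave. $B(x,r)=\{y:d(x,y)<r\}$. $\mathcal P_2(M)$: Borel probability measures $\mu$ with $\int d^2(x,y)\mu(\mathrm dy)<\infty$ for all $x$; a barycenter of $\mu$ is a minimizer of $x\mapsto\int d^2(x,y)\mu(\mathrm dy)$. (A1): every $\mu\in\mathcal P_2(M)$ has a barycenter. (A2): for every $\mu\in\mathcal P_2(M)$, barycenter $x^*$ of $\mu$ and geodesically convex $f:M\to\mathbb R$ either positive or in $L^1(\mu)$, $f(x^*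 )\le\int f\,\mathrm d\mu$. Online protocol: at round $t$ the player picks $x_t$, then loss $\ell_t:M\to\mathbb R$ is revealed (arbitrary). Regret $R_n=\sum_{t=1}^n\ell_t(x_t)-\min_x\sum_{t=1}^n\ell_t(x)$. \textsc{ewb} forecaster: $m_1=m$, $\mathrm dm_{t+1}=e^{-\beta\ell_t}\mathrm dm_t/\int e^{-\beta\ell_t}\mathrm dm_t$, $x_t$ a barycenter of $m_t$. *)

theory Defs
  imports "HOL-Probability.Probability"
begin

definition geodesic :: "(real \<Rightarrow> 'a::metric_space) \<Rightarrow> bool" where
  "geodesic \<gamma> \<longleftrightarrow>
     (\<forall>s\<in>{0..1}. \<forall>t\<in>{0..1}. dist (\<gamma> s) (\<gamma> t) = \<bar>t - s\<bar> * dist (\<gamma> 0) (\<gamma> 1))"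

definition geodesic_space :: "'a::metric_space itself \<Rightarrow> bool" where
  "geodesic_space _ \<longleftrightarrow> (\<forall>x y::'a. \<exists>\<gamma>. geodesic \<gamma> \<and> \<gamma> 0 = x \<and> \<gamma> 1 = y)"

definition geod_convex :: "('a::metric_space \<Rightarrow> real) \<Rightarrow> bool" where
  "geod_convex f \<longleftrightarrow> (\<forall>\<gamma>. geodesic \<gamma> \<longrightarrow> convex_on {0..1} (\<lambda>t. f (\<gamma> t)))"

definition geod_concave :: "('a::metric_space \<Rightarrow> real) \<Rightarrow> bool" where
  "geod_concave f \<longleftrightarrow> geod_convex (\<lambda>x. - f x)"

definition geod_expconcave :: "real \<Rightarrow> ('a::metric_space \<Rightarrow> real) \<Rightarrow> bool" where
  "geod_expconcave \<beta> f \<longleftrightarrow> geod_concave (\<lambda>x. exp (- \<beta> * f x))"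

definition P2 :: "'a::metric_space measure \<Rightarrow> bool" where
  "P2 \<mu> \<longleftrightarrow> prob_space \<mu> \<and> sets \<mu> = sets borel \<and>
     (\<forall>x. (\<integral>\<^sup>+ y. ennreal ((dist x y)\<^sup>2) \<partial>\<mu>) < \<infinity>)"

definition barycenter :: "'a::metric_space measure \<Rightarrow> 'a \<Rightarrow> bool" where
  "barycenter \<mu> x \<longleftrightarrow>
     (\<forall>z. (\<integral>y. (dist x y)\<^sup>2 \<partial>\<mu>) \<le> (\<integral>y. (dist z y)\<^sup>2 \<partial>\<mu>))"

definition A1 :: "'a::metric_space itself \<Rightarrow> bool" where
  "A1 _ \<longleftrightarrow> (\<forall>\<mu>::'a measure. P2 \<mu> \<longrightarrow> (\<exists>x. barycenter \<mu> x))"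

text \<open>Jensen-type inequality at barycenters; for nonnegative f the integral is the
  (possibly infinite) nonnegative integral.\<close>
definition A2 :: "'a::metric_space itself \<Rightarrow> bool" where
  "A2 _ \<longleftrightarrow> (\<forall>(\<mu>::'a measure) x f. P2 \<mu> \<longrightarrow> barycenter \<mu> x \<longrightarrow> geod_convex f \<longrightarrow>
      ((\<forall>y. f y \<ge> 0) \<longrightarrow> ennreal (f x) \<le> (\<integral>\<^sup>+ y. ennreal (f y) \<partial>\<mu>)) \<and>
      (integrable \<mu> f \<longrightarrow> f x \<le> (\<integral>y. f y \<partial>\<mu>)))"

text \<open>EWB weights: ewb m beta l t = m_t for t >= 1 (the value at 0 is irrelevant);
  m_1 = m, dm_{t+1} = exp(-beta l_t) dm_t / int exp(-beta l_t) dm_t.\<close>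
primrec ewb :: "'a measure \<Rightarrow> real \<Rightarrow> (nat \<Rightarrow> 'a \<Rightarrow> real) \<Rightarrow> nat \<Rightarrow> 'a measure" where
  "ewb m \<beta> l 0 = m"
| "ewb m \<beta> l (Suc t) =
     (if t = 0 then m
      else density (ewb m \<beta> l t)
        (\<lambda>x. ennreal (exp (- \<beta> * l t x) / (\<integral>y. exp (- \<beta> * l t y) \<partial>(ewb m \<beta> l t)))))"

end

theory Submission
  imports Defs
begin

theorem mainTheorem4:
  fixes m :: "'a::polish_space measure"
    and p r0 \<beta> L :: real
    and c :: "'a \<Rightarrow> real"
    and l :: "nat \<Rightarrow> 'a \<Rightarrow> real"
    and x :: "nat \<Rightarrow> 'a"
    and n :: nat
    and xstar :: 'a
  assumes geod: "geodesic_space TYPE('a)"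
    and A1: "A1 TYPE('a)" and A2: "A2 TYPE('a)"
    and m: "P2 m"
    and p: "p > 0" and r0: "r0 > 0"
    and c_pos: "\<forall>y. c y > 0"
    and ball: "\<forall>y. \<forall>r\<in>{0<..r0}. measure m (ball y r) > c y * r powr p"
    and \<beta>: "\<beta> > 0" and L: "L > 0"
    and meas: "\<forall>t\<ge>1. l t \<in> borel_measurable borel"
    and expc: "\<forall>t\<ge>1. geod_expconcave \<beta> (l t)"
    and lip: "\<forall>t\<ge>1. L-lipschitz_on UNIV (l t)"
    and wd_int: "\<forall>t\<ge>1. integrable (ewb m \<beta> l t) (\<lambda>y. exp (- \<beta> * l t y))
                       \<and> (\<integral>y. exp (- \<beta> * l t y) \<partial>(ewb m \<beta> l t)) > 0"
    and wd_P2: "\<forall>t\<ge>1. P2 (ewb m \<beta> l t)"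
    and xt: "\<forall>t\<in>{1..n}. barycenter (ewb m \<beta> l t) (x t)"
    and n: "n \<ge> 1" and n_r0: "real n \<ge> 1 / r0"
    and xstar: "\<forall>z. (\<Sum>t=1..n. l t xstar) \<le> (\<Sum>t=1..n. l t z)"
  shows "(\<Sum>t=1..n. l t (x t)) - (\<Sum>t=1..n. l t xstar)
           \<le> L + (1 / \<beta>) * ln (1 / c xstar) + p * ln (real n) / \<beta>"
proof -
  define Z where "Z t = (\<integral>y. exp (- \<beta> * l t y) \<partial>(ewb m \<beta> l t))" for t
  define P where "P t = (\<Prod>s\<in>{1..t}. Z s)" for t
  define S where "S t y = (\<Sum>s\<in>{1..t}. l s y)" for t y
  have sets_m: "sets m = sets borel" using m unfolding P2_def by auto
  have pm: "prob_space m" using m unfolding P2_def by auto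
  have Zpos: "Z t > 0" if "t \<ge> 1" for t using wd_int that unfolding Z_def by auto
  have Ppos: "P t > 0" for t unfolding P_def by (rule prod_pos) (use Zpos in auto)
  have mb: "f \<in> borel_measurable m" if "f \<in> borel_measurable borel" for f :: "'a \<Rightarrow> real"
    using that measurable_cong_sets[OF sets_m refl] by metis
  have Smeas: "S t \<in> borel_measurable borel" for t
  proof -
    have "(\<lambda>y. \<Sum>s\<in>{1..t}. l s y) \<in> borel_measurable borel"
      by (rule borel_measurable_sum) (use meas in auto)
    then show ?thesis unfolding S_def by (simp add: fun_eq_iff)
  qed
  have lmeas: "(\<lambda>y. ennreal (exp (- \<beta> * l t y) / Z t)) \<in> borel_measurable m" if "t \<ge> 1" for t
  proof -
    have [measurable]: "l t \<in> borel_measurable borel" using meas that by auto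
    have "(\<lambda>y. exp (- \<beta> * l t y) / Z t) \<in> borel_measurable borel"
      by measurable
    then show ?thesis using mb by measurable
  qed
  have gmeas: "(\<lambda>y. ennreal (exp (- \<beta> * S t y) / P t)) \<in> borel_measurable m" for t
  proof -
    have [measurable]: "S t \<in> borel_measurable borel" by (rule Smeas)
    have "(\<lambda>y. exp (- \<beta> * S t y) / P t) \<in> borel_measurable borel"
      by measurable
    then show ?thesis using mb by measurable
  qed
  have dens: "ewb m \<beta> l (Suc t) = density m (\<lambda>y. ennreal (exp (- \<beta> * S t y) / P t))" for t
  proof (induction t)
    case 0
    then show ?case by (simp add: S_def P_def density_1)
  next
    case (Suc t)
    have "ewb m \<beta> l (Suc (Suc t)) = density (ewb m \<beta> l (Suc t)) (\<lambda>x. ennreal (exp (- \<beta> * l (Suc t) x) / Z (Suc t)))"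
      by (simp add: Z_def)
    also have "\<dots> = density m (\<lambda>x. ennreal (exp (- \<beta> * S t x) / P t) * ennreal (exp (- \<beta> * l (Suc t) x) / Z (Suc t)))"
      unfolding Suc.IH
      by (rule density_density_eq[OF gmeas]) (use lmeas[of "Suc t"] measurable_cong_sets in auto)
    also have "\<dots> = density m (\<lambda>y. ennreal (exp (- \<beta> * S (Suc t) y) / P (Suc t)))"
    proof (rule density_cong)
      show "(\<lambda>x. ennreal (exp (- \<beta> * S t x) / P t) * ennreal (exp (- \<beta> * l (Suc t) x) / Z (Suc t))) \<in> borel_measurable m"
        using gmeas lmeas[of "Suc t"] by measurable
      show "(\<lambda>y. ennreal (exp (- \<beta> * S (Suc t) y) / P (Suc t))) \<in> borel_measurable m" by (rule gmeas)
      have "ennreal (exp (- \<beta> * S t x) / P t) * ennreal (exp (- \<beta> * l (Suc t) x) / Z (Suc t))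
          = ennreal (exp (- \<beta> * S (Suc t) x) / P (Suc t))" for x
      proof -
        have "exp (- \<beta> * S (Suc t) x) = exp (- \<beta> * S t x) * exp (- \<beta> * l (Suc t) x)"
          by (simp add: S_def distrib_left exp_add[symmetric] algebra_simps)
        moreover have "P (Suc t) = P t * Z (Suc t)" by (simp add: P_def)
        ultimately show ?thesis
          using Ppos[of t] Zpos[of "Suc t"]
          by (simp add: ennreal_mult[symmetric] divide_nonneg_pos)
      qed
      then show "AE x in m. ennreal (exp (- \<beta> * S t x) / P t) * ennreal (exp (- \<beta> * l (Suc t) x) / Z (Suc t))
          = ennreal (exp (- \<beta> * S (Suc t) x) / P (Suc t))" by simp
    qed
    finally show ?case .
  qed
  have jen: "Z t \<le> exp (- \<beta> * l t (x t))" if t: "t \<in> {1..n}" for t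
  proof -
    have cv: "geod_convex (\<lambda>y. - exp (- \<beta> * l t y))"
      using expc t unfolding geod_expconcave_def geod_concave_def by auto
    have int: "integrable (ewb m \<beta> l t) (\<lambda>y. - exp (- \<beta> * l t y))"
      using wd_int t by auto
    have "- exp (- \<beta> * l t (x t)) \<le> (\<integral>y. - exp (- \<beta> * l t y) \<partial>(ewb m \<beta> l t))"
      using A2 wd_P2 xt t cv int unfolding A2_def by (meson atLeastAtMost_iff)
    then show ?thesis unfolding Z_def by simp
  qed
  have lZ: "l t (x t) \<le> - ln (Z t) / \<beta>" if t: "t \<in> {1..n}" for t
  proof -
    have "ln (Z t) \<le> ln (exp (- \<beta> * l t (x t)))"
      using jen[OF t] Zpos[of t] t by (subst ln_le_cancel_iff) auto
    then have "ln (Z t) \<le> - \<beta> * l t (x t)" by simp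
    then show ?thesis using \<beta> by (simp add: field_simps)
  qed
  have sum1: "(\<Sum>t=1..n. l t (x t)) \<le> - ln (P n) / \<beta>"
  proof -
    have "(\<Sum>t=1..n. l t (x t)) \<le> (\<Sum>t=1..n. - ln (Z t) / \<beta>)"
      by (rule sum_mono) (rule lZ)
    also have "\<dots> = - (\<Sum>t=1..n. ln (Z t)) / \<beta>"
      by (simp add: sum_divide_distrib[symmetric] sum_negf)
    also have "(\<Sum>t=1..n. ln (Z t)) = ln (P n)"
      unfolding P_def by (subst ln_prod) (use Zpos in \<open>force+\<close>)
    finally show ?thesis .
  qed
  define r where "r = 1 / real n"
  have rpos: "r > 0" using n by (simp add: r_def)
  have rle: "r \<le> r0" using n_r0 r0 n unfolding r_def by (simp add: field_simps)
  define B where "B = ball xstar r"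
  have Bs: "B \<in> sets m" unfolding B_def using sets_m by simp
  have Sball: "S n y \<le> S n xstar + L" if "y \<in> B" for y
  proof -
    have "l t y \<le> l t xstar + L / real n" if t: "t \<in> {1..n}" for t
    proof -
      have "dist (l t y) (l t xstar) \<le> L * dist y xstar"
        using lip t by (intro lipschitz_onD) auto
      moreover have "dist y xstar < r" using \<open>y \<in> B\<close> unfolding B_def by (simp add: dist_commute)
      ultimately have "l t y - l t xstar \<le> L * r"
        using L by (smt (verit) dist_real_def mult_left_mono)
      then show ?thesis by (simp add: r_def)
    qed
    then have "S n y \<le> (\<Sum>t=1..n. l t xstar + L / real n)"
      unfolding S_def by (rule sum_mono)
    also have "\<dots> = S n xstar + L" using n by (simp add: S_def sum.distrib)
    finally show ?thesis .
  qed
  define K where "K = exp (- \<beta> * (S n xstar + L)) / P n"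
  have Kpos: "K > 0" unfolding K_def using Ppos by simp
  have "emeasure (ewb m \<beta> l (Suc n)) (space m) = 1"
  proof -
    have "Suc n \<ge> 1" by simp
    then have "P2 (ewb m \<beta> l (Suc n))" using wd_P2 by blast
    then have "prob_space (ewb m \<beta> l (Suc n))" unfolding P2_def by blast
    then have "emeasure (ewb m \<beta> l (Suc n)) (space (ewb m \<beta> l (Suc n))) = 1"
      by (rule prob_space.emeasure_space_1)
    then show ?thesis unfolding dens by (simp only: space_density)
  qed
  then have "(\<integral>\<^sup>+ y. ennreal (exp (- \<beta> * S n y) / P n) * indicator (space m) y \<partial>m) = 1"
    unfolding dens emeasure_density[OF gmeas sets.top] .
  moreover have "(\<integral>\<^sup>+ y. ennreal (exp (- \<beta> * S n y) / P n) * indicator (space m) y \<partial>m)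
      = (\<integral>\<^sup>+ y. ennreal (exp (- \<beta> * S n y) / P n) \<partial>m)"
    by (rule nn_integral_cong) simp
  ultimately have one: "(\<integral>\<^sup>+ y. ennreal (exp (- \<beta> * S n y) / P n) \<partial>m) = 1"
    by simp
  have "(\<integral>\<^sup>+ y. ennreal K * indicator B y \<partial>m) \<le> (\<integral>\<^sup>+ y. ennreal (exp (- \<beta> * S n y) / P n) \<partial>m)"
  proof (rule nn_integral_mono)
    fix y
    show "ennreal K * indicator B y \<le> ennreal (exp (- \<beta> * S n y) / P n)"
    proof (cases "y \<in> B")
      case True
      have "K \<le> exp (- \<beta> * S n y) / P n"
        unfolding K_def using Sball[OF True] \<beta> Ppos[of n]
        by (intro divide_right_mono) (auto simp: mult_left_mono)
      then show ?thesis using True by (simp add: ennreal_leI)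
    qed simp
  qed
  then have "ennreal K * emeasure m B \<le> 1"
    using one by (simp add: nn_integral_cmult_indicator[OF Bs])
  then have "ennreal (K * measure m B) \<le> 1"
    using finite_measure.emeasure_eq_measure[OF prob_space.finite_measure[OF pm]] Kpos by (simp add: ennreal_mult)
  then have KB: "K * measure m B \<le> 1"
    by (simp add: ennreal_le_1)
  have mB: "measure m B > c xstar * r powr p"
    using ball rpos rle unfolding B_def by auto
  have cpos: "c xstar > 0" using c_pos by auto
  have "K * (c xstar * r powr p) \<le> 1"
    using KB mB Kpos by (smt (verit) mult_strict_left_mono)
  then have "exp (- \<beta> * (S n xstar + L)) * c xstar * r powr p \<le> P n"
    using Ppos[of n] unfolding K_def by (simp add: field_simps)
  then have "ln (exp (- \<beta> * (S n xstar + L)) * c xstar * r powr p) \<le> ln (P n)"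
    using cpos rpos Ppos[of n] by (subst ln_le_cancel_iff) auto
  then have lnP: "- \<beta> * (S n xstar + L) + ln (c xstar) - p * ln (real n) \<le> ln (P n)"
    using cpos rpos n by (simp add: ln_mult r_def ln_div)
  have "- ln (P n) / \<beta> \<le> S n xstar + L - ln (c xstar) / \<beta> + p * ln (real n) / \<beta>"
    using lnP \<beta> by (simp add: field_simps)
  moreover have "(1 / \<beta>) * ln (1 / c xstar) = - ln (c xstar) / \<beta>"
    using cpos by (simp add: ln_div)
  ultimately show ?thesis using sum1 unfolding S_def by linarith
qed

end
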